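(* Consider the noisy group testing model in the context with $K>1$ and $p=\frac{1}{(1-u)K}$, and let $\Gamma=(1-q)\left(1-(1-u)p\right)^K$, $\gamma_0=\frac{u}{1-(1-u)p}$. For RoAl set $\psi_0=0$; for CoAl set $\psi_0=\frac{\gamma_0\Gamma}{1-\gamma_0\Gamma}$ and use the parameter $\psi_{cb}=\psi_0$. Let $c_0>0$ be any constant. Then there exist absolute constants $C_{a1},C_{a2}>0$, independent of $N$, $L$ and $K$ (and different for each of the two algorithms), such that if the number of tests satisfies $$M\ \ge\ (1+c_0)\,\frac{K(1-u)}{(1-q)(1-\gamma_0)^2(1+\psi_0)}\left(\frac{C_{a1}\log\left[K\binom{N-K}{L-1}\right]}{(N-K)-(L-1)}+C_{a2}\log K\right),$$ then, for a given defective set $S_d$, each of the algorithms RoAl and CoAl outputs $L$ items none of which is defective with probability exceeding $1-\exp\left(-c_0\log\left(K\binom{N-K}{L-1}\right)\right)-\exp(-c_0\log K)$.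
   Context: Group testing model: $N$ items indexed by $[N]$; a fixed defective set $S_d\subset[N]$ with $|S_d|=K$; $1\le L\le N-K$ is the desired number of non-defective items. Parameters $p\in(0,1)$, $u\in[0,1/2)$, $q\in[0,1/2)$. The test matrix $\mathbf{X}\in\{0,1\}^{M\times N}$ has i.i.d. Bernoulli($p$) entries $X_{lk}$; independently, $D_{lk}\sim\mathrm{Bernoulli}(1-u)$ i.i.d. and $W_l\sim\mathrm{Bernoulli}(q)$ i.i.d.; test outcomes are $Y_l=\left(\bigvee_{k\in S_d}D_{lk}X_{lk}\right)\vee W_l$, $l\in[M]$ ($\vee$ = boolean OR). Logarithms are natural. Algorithm RoAl: for each item $k$, compute $z(k)=\#\{l: Y_l=0,\ X_{lk}=1\}$ (the number of negative-outcome tests containing $k$); output a set of $L$ items with the largest values of $z$ (ties broken arbitrarily). Algorithm CoAl (with parameter $\psi_{cb}\ge0$): for each item $k$ compute $\mathcal{T}(k)=\#\{l: Y_l=0,X_{lk}=1\}-\psi_{cb}\,\#\{l:Y_l=1,X_{lk}=1\}$; output a set of $L$ items with the largest values of $\mathcal{T}$ (ties broken arbitrarily). An algorithm succeeds if its output set is disjoint from $S_d$; probabilities are over $\mathbf{X}$, $D$, $W$. *)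

theory Defs
  imports "HOL-Probability.Probability"
begin

text \<open>Items are indexed by {..<N}, tests by {..<M}.  A sample is a triple (X, D, W):
  X (l,k) test matrix entries ~ Bernoulli p, D (l,k) ~ Bernoulli (1-u), W l ~ Bernoulli q,
  all independent.\<close>

type_synonym gt_sample = "(nat \<times> nat \<Rightarrow> bool) \<times> (nat \<times> nat \<Rightarrow> bool) \<times> (nat \<Rightarrow> bool)"

definition gt_pmf :: "nat \<Rightarrow> nat \<Rightarrow> real \<Rightarrow> real \<Rightarrow> real \<Rightarrow> gt_sample pmf" where
  "gt_pmf M N p u q =
     do { X \<leftarrow> Pi_pmf ({..<M} \<times> {..<N}) False (\<lambda>_. bernoulli_pmf p);
          D \<leftarrow> Pi_pmf ({..<M} \<times> {..<N}) False (\<lambda>_. bernoulli_pmf (1 - u));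
          W \<leftarrow> Pi_pmf {..<M} False (\<lambda>_. bernoulli_pmf q);
          return_pmf (X, D, W) }"

definition gt_outcome :: "nat set \<Rightarrow> gt_sample \<Rightarrow> nat \<Rightarrow> bool" where
  "gt_outcome Sd s l = (case s of (X, D, W) \<Rightarrow> (\<exists>k\<in>Sd. D (l, k) \<and> X (l, k)) \<or> W l)"

definition roal_score :: "nat \<Rightarrow> nat set \<Rightarrow> gt_sample \<Rightarrow> nat \<Rightarrow> real" where
  "roal_score M Sd s k =
     real (card {l \<in> {..<M}. \<not> gt_outcome Sd s l \<and> fst s (l, k)})"

definition coal_score :: "real \<Rightarrow> nat \<Rightarrow> nat set \<Rightarrow> gt_sample \<Rightarrow> nat \<Rightarrow> real" where
  "coal_score psi M Sd s k =
     real (card {l \<in> {..<M}. \<not> gt_outcome Sd s l \<and> fst s (l, k)})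
     - psi * real (card {l \<in> {..<M}. gt_outcome Sd s l \<and> fst s (l, k)})"

text \<open>Possible outputs of "take L items with largest scores, ties broken arbitrarily".\<close>
definition top_sets :: "nat \<Rightarrow> nat \<Rightarrow> (nat \<Rightarrow> real) \<Rightarrow> nat set set" where
  "top_sets N L score =
     {T. T \<subseteq> {..<N} \<and> card T = L \<and> (\<forall>a\<in>T. \<forall>b\<in>{..<N} - T. score b \<le> score a)}"

text \<open>Success regardless of tie-breaking: every admissible output avoids the defectives.\<close>
definition alg_succeeds :: "nat \<Rightarrow> nat \<Rightarrow> nat set \<Rightarrow> (nat \<Rightarrow> real) \<Rightarrow> bool" where
  "alg_succeeds N L Sd score = (\<forall>T\<in>top_sets N L score. T \<inter> Sd = {})"

end

theory Submission
  imports Defs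
begin


lemma Pi_pmf_uncurry:
  assumes A: "finite A" and B: "finite B"
  shows "Pi_pmf (A \<times> B) dflt (\<lambda>_. P) =
         map_pmf (\<lambda>F (a,b). F a b) (Pi_pmf A (\<lambda>_. dflt) (\<lambda>_. Pi_pmf B dflt (\<lambda>_. P)))"
proof (rule pmf_eqI)
  fix g :: "'a \<times> 'b \<Rightarrow> 'c"
  have inj: "inj (case_prod :: ('a \<Rightarrow> 'b \<Rightarrow> 'c) \<Rightarrow> _)"
    by (auto simp: inj_def fun_eq_iff)
  have g: "case_prod (curry g) = g" by simp
  have "pmf (map_pmf (\<lambda>F (a,b). F a b) (Pi_pmf A (\<lambda>_. dflt) (\<lambda>_. Pi_pmf B dflt (\<lambda>_. P)))) g
      = pmf (Pi_pmf A (\<lambda>_. dflt) (\<lambda>_. Pi_pmf B dflt (\<lambda>_. P))) (curry g)"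
    using pmf_map_inj'[OF inj, where x="curry g"] g by simp
  also have "\<dots> = pmf (Pi_pmf (A \<times> B) dflt (\<lambda>_. P)) g"
  proof (cases "\<forall>x. x \<notin> A \<times> B \<longrightarrow> g x = dflt")
    case True
    have "pmf (Pi_pmf A (\<lambda>_. dflt) (\<lambda>_. Pi_pmf B dflt (\<lambda>_. P))) (curry g)
        = (\<Prod>a\<in>A. pmf (Pi_pmf B dflt (\<lambda>_. P)) (curry g a))"
      using True A by (subst pmf_Pi) (auto simp: fun_eq_iff)
    also have "\<dots> = (\<Prod>a\<in>A. \<Prod>b\<in>B. pmf P (g (a,b)))"
      using True B by (intro prod.cong refl, subst pmf_Pi) auto
    also have "\<dots> = (\<Prod>x\<in>A\<times>B. pmf P (g x))"
      by (simp add: prod.cartesian_product)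
    also have "\<dots> = pmf (Pi_pmf (A \<times> B) dflt (\<lambda>_. P)) g"
      using True A B by (subst pmf_Pi) auto
    finally show ?thesis .
  next
    case False
    then obtain a b where ab: "(a,b) \<notin> A \<times> B" "g (a,b) \<noteq> dflt" by auto
    have r: "pmf (Pi_pmf (A \<times> B) dflt (\<lambda>_. P)) g = 0"
      using False A B by (subst pmf_Pi) auto
    show ?thesis
    proof (cases "a \<in> A")
      case True
      with ab have "b \<notin> B" by auto
      have "pmf (Pi_pmf B dflt (\<lambda>_. P)) (curry g a) = 0"
        using B ab \<open>b \<notin> B\<close> by (subst pmf_Pi) auto
      hence "(\<Prod>a\<in>A. pmf (Pi_pmf B dflt (\<lambda>_. P)) (curry g a)) = 0"
        using True A by (intro prod_zero) auto
      thus ?thesis using A r by (subst pmf_Pi) auto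
    next
      case False
      have "curry g a \<noteq> (\<lambda>_. dflt)" using ab by (auto simp: fun_eq_iff)
      thus ?thesis using A r False by (subst pmf_Pi) auto
    qed
  qed
  finally show "pmf (Pi_pmf (A \<times> B) dflt (\<lambda>_. P)) g =
     pmf (map_pmf (\<lambda>F (a,b). F a b) (Pi_pmf A (\<lambda>_. dflt) (\<lambda>_. Pi_pmf B dflt (\<lambda>_. P)))) g" ..
qed

lemma nn_integral_rows:
  assumes A: "finite A" and B: "finite B"
  shows "(\<integral>\<^sup>+D. (\<Prod>a\<in>A. f a (\<lambda>b. D (a,b))) \<partial>Pi_pmf (A \<times> B) dflt (\<lambda>_. P))
       = (\<Prod>a\<in>A. \<integral>\<^sup>+d. f a d \<partial>Pi_pmf B dflt (\<lambda>_. P))"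
  by (subst Pi_pmf_uncurry[OF A B]) (simp add: nn_integral_prod_Pi_pmf[OF A] del: Pi_pmf_return_pmf)


definition row :: "gt_sample \<Rightarrow> nat \<Rightarrow> (nat \<Rightarrow> bool) \<times> (nat \<Rightarrow> bool) \<times> bool" where
  "row s l = (\<lambda>k. fst s (l,k), \<lambda>k. fst (snd s) (l,k), snd (snd s) l)"

definition rowE :: "nat \<Rightarrow> real \<Rightarrow> real \<Rightarrow> real \<Rightarrow> ((nat \<Rightarrow> bool) \<times> (nat \<Rightarrow> bool) \<times> bool \<Rightarrow> ennreal) \<Rightarrow> ennreal" where
  "rowE N p u q g = (\<integral>\<^sup>+x. \<integral>\<^sup>+d. \<integral>\<^sup>+w. g (x,d,w) \<partial>bernoulli_pmf q
       \<partial>Pi_pmf {..<N} False (\<lambda>_. bernoulli_pmf (1-u)) \<partial>Pi_pmf {..<N} False (\<lambda>_. bernoulli_pmf p))"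

lemma gt_factor:
  "(\<integral>\<^sup>+s. (\<Prod>l<M. g (row s l)) \<partial>gt_pmf M N p u q) = rowE N p u q g ^ M"
proof -
  have "(\<integral>\<^sup>+s. (\<Prod>l<M. g (row s l)) \<partial>gt_pmf M N p u q) =
    (\<integral>\<^sup>+X. \<integral>\<^sup>+D. \<integral>\<^sup>+W. (\<Prod>l<M. g (\<lambda>k. X (l,k), \<lambda>k. D (l,k), W l))
       \<partial>Pi_pmf {..<M} False (\<lambda>_. bernoulli_pmf q)
       \<partial>Pi_pmf ({..<M} \<times> {..<N}) False (\<lambda>_. bernoulli_pmf (1 - u))
       \<partial>Pi_pmf ({..<M} \<times> {..<N}) False (\<lambda>_. bernoulli_pmf p))"
    by (simp add: gt_pmf_def row_def)
  also have "\<dots> = (\<integral>\<^sup>+X. \<integral>\<^sup>+D. (\<Prod>l<M. \<integral>\<^sup>+w. g (\<lambda>k. X (l,k), \<lambda>k. D (l,k), w) \<partial>bernoulli_pmf q)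
       \<partial>Pi_pmf ({..<M} \<times> {..<N}) False (\<lambda>_. bernoulli_pmf (1 - u))
       \<partial>Pi_pmf ({..<M} \<times> {..<N}) False (\<lambda>_. bernoulli_pmf p))"
    by (subst nn_integral_prod_Pi_pmf) auto
  also have "\<dots> = (\<integral>\<^sup>+X. (\<Prod>l<M. \<integral>\<^sup>+d. \<integral>\<^sup>+w. g (\<lambda>k. X (l,k), d, w) \<partial>bernoulli_pmf q
       \<partial>Pi_pmf {..<N} False (\<lambda>_. bernoulli_pmf (1 - u)))
       \<partial>Pi_pmf ({..<M} \<times> {..<N}) False (\<lambda>_. bernoulli_pmf p))"
    by (subst nn_integral_rows[where f = "\<lambda>l d. \<integral>\<^sup>+w. g (\<lambda>k. X (l,k), d, w) \<partial>bernoulli_pmf q" for X]) auto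
  also have "\<dots> = (\<Prod>l<M. rowE N p u q g)"
    unfolding rowE_def
    by (subst nn_integral_rows[where f = "\<lambda>l x. \<integral>\<^sup>+d. \<integral>\<^sup>+w. g (x, d, w) \<partial>bernoulli_pmf q
       \<partial>Pi_pmf {..<N} False (\<lambda>_. bernoulli_pmf (1 - u))"]) auto
  finally show ?thesis by simp
qed


lemma finite_set_Pi_bern: "finite (set_pmf (Pi_pmf {..<(N::nat)} False (\<lambda>_. bernoulli_pmf r)))"
  by (subst set_Pi_pmf) (auto intro!: finite_PiE_dflt simp del: lessThan_iff)

lemma finite_set_bern: "finite (set_pmf (bernoulli_pmf r))"
  by (rule finite_subset[of _ UNIV]) auto

definition RE :: "nat \<Rightarrow> real \<Rightarrow> real \<Rightarrow> real \<Rightarrow> ((nat \<Rightarrow> bool) \<times> (nat \<Rightarrow> bool) \<times> bool \<Rightarrow> real) \<Rightarrow> real" where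
  "RE N p u q g = measure_pmf.expectation (Pi_pmf {..<N} False (\<lambda>_. bernoulli_pmf p)) (\<lambda>x.
       measure_pmf.expectation (Pi_pmf {..<N} False (\<lambda>_. bernoulli_pmf (1-u))) (\<lambda>d.
       measure_pmf.expectation (bernoulli_pmf q) (\<lambda>w. g (x,d,w))))"

lemma nn_eq_int_fin:
  fixes f :: "'a \<Rightarrow> real"
  assumes "finite (set_pmf P)" "\<And>x. f x \<ge> 0"
  shows "(\<integral>\<^sup>+x. ennreal (f x) \<partial>P) = ennreal (measure_pmf.expectation P f)"
  using assms by (intro nn_integral_eq_integral integrable_measure_pmf_finite) auto

lemma rowE_RE:
  assumes "\<And>r. g r \<ge> 0"
  shows "rowE N p u q (\<lambda>r. ennreal (g r)) = ennreal (RE N p u q g)"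
proof -
  have nn1: "measure_pmf.expectation (bernoulli_pmf q) (\<lambda>w. g (x,d,w)) \<ge> 0" for x d
    using assms by (intro integral_nonneg_AE) auto
  have nn2: "measure_pmf.expectation (Pi_pmf {..<N} False (\<lambda>_. bernoulli_pmf (1-u))) (\<lambda>d.
       measure_pmf.expectation (bernoulli_pmf q) (\<lambda>w. g (x,d,w))) \<ge> 0" for x
    using nn1 by (intro integral_nonneg_AE) auto
  show ?thesis
    unfolding rowE_def RE_def
    by (simp add: nn_eq_int_fin finite_set_Pi_bern finite_set_bern assms nn1 nn2)
qed

lemma RE_add: "RE N p u q (\<lambda>r. f r + g r) = RE N p u q f + RE N p u q g"
  unfolding RE_def
  by (simp add: Bochner_Integration.integral_add integrable_measure_pmf_finite finite_set_Pi_bern finite_set_bern)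

lemma RE_diff: "RE N p u q (\<lambda>r. f r - g r) = RE N p u q f - RE N p u q g"
  unfolding RE_def
  by (simp add: Bochner_Integration.integral_diff integrable_measure_pmf_finite finite_set_Pi_bern finite_set_bern)

lemma RE_cmult: "RE N p u q (\<lambda>r. c * f r) = c * RE N p u q f"
  unfolding RE_def by simp

lemma RE_const: "RE N p u q (\<lambda>r. c) = c"
  unfolding RE_def by simp

lemma E_Pi_prod:
  fixes N :: nat
  assumes "0 \<le> r" "r \<le> 1" "\<And>k b. f k b \<ge> (0::real)"
  shows "measure_pmf.expectation (Pi_pmf {..<N} False (\<lambda>_. bernoulli_pmf r)) (\<lambda>x. \<Prod>k<N. f k (x k))
     = (\<Prod>k<N. r * f k True + (1 - r) * f k False)"
  using assms
  by (subst expectation_prod_Pi_pmf) (auto intro!: integrable_measure_pmf_finite finite_set_bern prod.cong simp: algebra_simps)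

lemma RE_prod:
  assumes p: "0 \<le> p" "p \<le> 1" and u: "0 \<le> u" "u \<le> 1" and q: "0 \<le> q" "q \<le> 1"
    and nn: "\<And>b. W b \<ge> 0" "\<And>k a b. c k a b \<ge> (0::real)"
  shows "RE N p u q (\<lambda>(x,d,w). W w * (\<Prod>k<N. c k (x k) (d k))) =
     (q * W True + (1 - q) * W False) *
     (\<Prod>k<N. p * ((1-u) * c k True True + u * c k True False) + (1-p) * ((1-u) * c k False True + u * c k False False))"
proof -
  have "RE N p u q (\<lambda>(x,d,w). W w * (\<Prod>k<N. c k (x k) (d k))) =
    measure_pmf.expectation (Pi_pmf {..<N} False (\<lambda>_. bernoulli_pmf p)) (\<lambda>x.
       measure_pmf.expectation (Pi_pmf {..<N} False (\<lambda>_. bernoulli_pmf (1-u))) (\<lambda>d.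
       (q * W True + (1 - q) * W False) * (\<Prod>k<N. c k (x k) (d k))))"
    unfolding RE_def using q by (simp add: algebra_simps)
  also have "\<dots> = measure_pmf.expectation (Pi_pmf {..<N} False (\<lambda>_. bernoulli_pmf p)) (\<lambda>x.
       (q * W True + (1 - q) * W False) * (\<Prod>k<N. (1-u) * c k (x k) True + u * c k (x k) False))"
  proof (intro Bochner_Integration.integral_cong refl)
    fix x :: "nat \<Rightarrow> bool"
    have "measure_pmf.expectation (Pi_pmf {..<N} False (\<lambda>_. bernoulli_pmf (1-u))) (\<lambda>d. \<Prod>k<N. c k (x k) (d k))
       = (\<Prod>k<N. (1-u) * c k (x k) True + u * c k (x k) False)"
      using E_Pi_prod[of "1-u" "\<lambda>k b. c k (x k) b" N] u nn by simp
    thus "measure_pmf.expectation (Pi_pmf {..<N} False (\<lambda>_. bernoulli_pmf (1-u))) (\<lambda>d.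
       (q * W True + (1 - q) * W False) * (\<Prod>k<N. c k (x k) (d k))) =
       (q * W True + (1 - q) * W False) * (\<Prod>k<N. (1-u) * c k (x k) True + u * c k (x k) False)" by simp
  qed
  also have "\<dots> = (q * W True + (1 - q) * W False) * measure_pmf.expectation (Pi_pmf {..<N} False (\<lambda>_. bernoulli_pmf p)) (\<lambda>x.
       (\<Prod>k<N. (1-u) * c k (x k) True + u * c k (x k) False))"
    by simp
  also have "\<dots> = (q * W True + (1 - q) * W False) *
     (\<Prod>k<N. p * ((1-u) * c k True True + u * c k True False) + (1-p) * ((1-u) * c k False True + u * c k False False))"
    using p u nn by (subst E_Pi_prod) (auto intro!: add_nonneg_nonneg mult_nonneg_nonneg)
  finally show ?thesis .
qed

lemma markov_pmf:
  fixes F :: "'a \<Rightarrow> ennreal" and P :: "'a pmf"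
  assumes A: "\<And>s. A s \<Longrightarrow> ennreal c \<le> F s" and c: "c > 0"
    and I: "(\<integral>\<^sup>+s. F s \<partial>P) \<le> ennreal (c * x)" and x: "x \<ge> 0"
  shows "measure_pmf.prob P {s. A s} \<le> x"
proof -
  have "ennreal c * emeasure P {s. A s} = (\<integral>\<^sup>+s. ennreal c * indicator {s. A s} s \<partial>P)"
    by (simp add: nn_integral_cmult_indicator)
  also have "\<dots> \<le> (\<integral>\<^sup>+s. F s \<partial>P)"
    by (intro nn_integral_mono) (auto simp: indicator_def A)
  also have "\<dots> \<le> ennreal (c * x)" by (rule I)
  finally have "ennreal c * ennreal (measure_pmf.prob P {s. A s}) \<le> ennreal (c * x)"
    by (simp add: measure_pmf.emeasure_eq_measure)
  hence "c * measure_pmf.prob P {s. A s} \<le> c * x"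
    using c x by (simp add: ennreal_mult'[symmetric])
  thus ?thesis using c by simp
qed


lemma prod_two_sets:
  fixes \<alpha> \<beta> :: real and N :: nat
  assumes "A \<subseteq> {..<N}" "B \<subseteq> {..<N}" "A \<inter> B = {}"
  shows "(\<Prod>k<N. if k \<in> A then \<alpha> else if k \<in> B then \<beta> else 1) = \<alpha> ^ card A * \<beta> ^ card B"
proof -
  have fin: "finite A" "finite B" using assms(1,2) by (meson finite_lessThan finite_subset)+
  have "(\<Prod>k<N. if k \<in> A then \<alpha> else if k \<in> B then \<beta> else 1) =
        (\<Prod>k\<in>A \<union> B. if k \<in> A then \<alpha> else if k \<in> B then \<beta> else 1)"
    using assms by (intro prod.mono_neutral_right) auto
  also have "\<dots> = (\<Prod>k\<in>A. if k \<in> A then \<alpha> else if k \<in> B then \<beta> else 1) *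
                  (\<Prod>k\<in>B. if k \<in> A then \<alpha> else if k \<in> B then \<beta> else 1)"
    using assms fin by (intro prod.union_disjoint) auto
  also have "\<dots> = (\<Prod>k\<in>A. \<alpha>) * (\<Prod>k\<in>B. \<beta>)"
    using assms by (intro arg_cong2[where f="(*)"] prod.cong) auto
  finally show ?thesis by simp
qed

definition Yr :: "nat set \<Rightarrow> (nat \<Rightarrow> bool) \<times> (nat \<Rightarrow> bool) \<times> bool \<Rightarrow> bool" where
  "Yr Sd r = (case r of (x,d,w) \<Rightarrow> (\<exists>k\<in>Sd. d k \<and> x k) \<or> w)"

definition ind :: "bool \<Rightarrow> real" where "ind b = (if b then 1 else 0)"

lemma notY_prod:
  assumes "Sd \<subseteq> {..<N}"
  shows "ind (\<not> Yr Sd (x,d,w)) = ind (\<not> w) * (\<Prod>k<N. if k \<in> Sd then ind (\<not> (x k \<and> d k)) else 1)"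
proof -
  have "(\<Prod>k<N. if k \<in> Sd then ind (\<not> (x k \<and> d k)) else 1) = (if (\<exists>k\<in>Sd. d k \<and> x k) then 0 else 1)"
  proof (cases "\<exists>k\<in>Sd. d k \<and> x k")
    case True
    then obtain k where "k \<in> Sd" "d k \<and> x k" by auto
    thus ?thesis using assms by (intro trans[OF prod_zero]) (auto simp: ind_def intro!: bexI[of _ k])
  next
    case False
    thus ?thesis by (auto simp: ind_def intro!: prod.neutral)
  qed
  thus ?thesis by (auto simp: Yr_def ind_def)
qed

lemma E1:
  assumes p: "0 \<le> p" "p \<le> 1" and u: "0 \<le> u" "u \<le> 1" and q: "0 \<le> q" "q \<le> 1"
    and Sd: "Sd \<subseteq> {..<N}" and S: "S \<subseteq> {..<N}" "S \<inter> Sd = {}" and f: "\<And>b. f b \<ge> 0"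
  shows "RE N p u q (\<lambda>(x,d,w). ind (\<not> Yr Sd (x,d,w)) * (\<Prod>k\<in>S. f (x k))) =
    (1-q) * (1 - (1-u)*p) ^ card Sd * (p * f True + (1-p) * f False) ^ card S"
proof -
  have fS: "finite S" using S by (auto intro: finite_subset[OF _ finite_lessThan])
  have pS: "(\<Prod>k\<in>S. f (x k)) = (\<Prod>k<N. if k \<in> S then f (x k) else 1)" for x
    using S fS by (intro prod.mono_neutral_cong_left) auto
  have "RE N p u q (\<lambda>(x,d,w). ind (\<not> Yr Sd (x,d,w)) * (\<Prod>k\<in>S. f (x k))) =
    RE N p u q (\<lambda>(x,d,w). ind (\<not> w) * (\<Prod>k<N. (if k \<in> Sd then ind (\<not> (x k \<and> d k)) else 1) * (if k \<in> S then f (x k) else 1)))"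
    unfolding notY_prod[OF Sd] pS by (simp add: prod.distrib mult.assoc)
  also have "\<dots> = (1-q) * (\<Prod>k<N. if k \<in> Sd then 1 - (1-u)*p else if k \<in> S then p * f True + (1-p) * f False else 1)"
    apply (subst RE_prod[where c = "\<lambda>k a b. (if k \<in> Sd then ind (\<not> (a \<and> b)) else 1) * (if k \<in> S then f a else 1)"])
    using p u q f S apply (auto simp: ind_def)[8]
    apply (rule arg_cong2[where f="(*)"])
     apply (simp add: ind_def)
    apply (rule prod.cong, rule refl)
    using S by (auto simp: ind_def algebra_simps)
  also have "\<dots> = (1-q) * ((1 - (1-u)*p) ^ card Sd * (p * f True + (1-p) * f False) ^ card S)"
    using Sd S by (subst prod_two_sets) auto
  finally show ?thesis by simp
qed

lemma E2:
  assumes p: "0 \<le> p" "p \<le> 1" and u: "0 \<le> u" "u \<le> 1" and q: "0 \<le> q" "q \<le> 1"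
    and S: "S \<subseteq> {..<N}" and f: "\<And>b. f b \<ge> 0"
  shows "RE N p u q (\<lambda>(x,d,w). (\<Prod>k\<in>S. f (x k))) = (p * f True + (1-p) * f False) ^ card S"
proof -
  have fS: "finite S" using S by (auto intro: finite_subset[OF _ finite_lessThan])
  have pS: "(\<Prod>k\<in>S. f (x k)) = (\<Prod>k<N. if k \<in> S then f (x k) else 1)" for x
    using S fS by (intro prod.mono_neutral_cong_left) auto
  have "RE N p u q (\<lambda>(x,d,w). (\<Prod>k\<in>S. f (x k))) =
    RE N p u q (\<lambda>(x,d,w). 1 * (\<Prod>k<N. (if k \<in> S then f (x k) else 1)))"
    unfolding pS by simp
  also have "\<dots> = (\<Prod>k<N. if k \<in> {} then 0 else if k \<in> S then p * f True + (1-p) * f False else 1)"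
    using p u q f S
    apply (subst RE_prod[where c = "\<lambda>k a b. (if k \<in> S then f a else 1)"])
    using p u q f S apply (auto)[8]
    by (auto simp: algebra_simps intro!: prod.cong)
  also have "\<dots> = (p * f True + (1-p) * f False) ^ card S"
    using S by (subst prod_two_sets) auto
  finally show ?thesis .
qed

lemma E3:
  assumes p: "0 \<le> p" "p \<le> 1" and u: "0 \<le> u" "u \<le> 1" and q: "0 \<le> q" "q \<le> 1"
    and Sd: "Sd \<subseteq> {..<N}" and j: "j \<in> Sd"
  shows "RE N p u q (\<lambda>(x,d,w). ind (x j) * ind (\<not> Yr Sd (x,d,w))) =
    (1-q) * (1 - (1-u)*p) ^ (card Sd - 1) * (p * u)"
proof -
  have "RE N p u q (\<lambda>(x,d,w). ind (x j) * ind (\<not> Yr Sd (x,d,w))) =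
    RE N p u q (\<lambda>(x,d,w). ind (\<not> w) * (\<Prod>k<N. (if k \<in> Sd then ind (\<not> (x k \<and> d k)) else 1) * (if k = j then ind (x k) else 1)))"
  proof -
    have "(\<Prod>k<N. (if k \<in> Sd then ind (\<not> (x k \<and> d k)) else 1) * (if k = j then ind (x k) else 1)) =
       (\<Prod>k<N. (if k \<in> Sd then ind (\<not> (x k \<and> d k)) else 1)) * ind (x j)" for x d
      using Sd j by (auto simp add: prod.distrib prod.delta)
    thus ?thesis unfolding notY_prod[OF Sd] by (simp add: mult_ac)
  qed
  also have "\<dots> = (1-q) * (\<Prod>k<N. if k \<in> Sd - {j} then 1 - (1-u)*p else if k \<in> {j} then p * u else 1)"
    apply (subst RE_prod[where c = "\<lambda>k a b. (if k \<in> Sd then ind (\<not> (a \<and> b)) else 1) * (if k = j then ind a else 1)"])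
    using p u q apply (auto simp: ind_def)[8]
    apply (rule arg_cong2[where f="(*)"])
     apply (simp add: ind_def)
    apply (rule prod.cong, rule refl)
    using j by (auto simp: ind_def algebra_simps)
  also have "\<dots> = (1-q) * ((1 - (1-u)*p) ^ (card Sd - 1) * (p * u))"
    using Sd j by (subst prod_two_sets) auto
  finally show ?thesis by simp
qed

lemma E4:
  assumes p: "0 \<le> p" "p \<le> 1" and u: "0 \<le> u" "u \<le> 1" and q: "0 \<le> q" "q \<le> 1"
    and j: "j < N"
  shows "RE N p u q (\<lambda>(x,d,w). ind (x j)) = p"
  using E2[OF p u q, of "{j}" N "ind"] j by (simp add: ind_def)


lemma RE_nonneg: "(\<And>r. g r \<ge> 0) \<Longrightarrow> RE N p u q g \<ge> 0"
  unfolding RE_def by (intro integral_nonneg_AE AE_I2)+ auto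

lemma chernoff_rows:
  assumes g: "\<And>r. g r > 0" and A: "\<And>s. A s \<Longrightarrow> c \<le> (\<Prod>l<M. g (row s l))" and c: "c > 0"
    and B: "RE N p u q g \<le> B"
  shows "measure_pmf.prob (gt_pmf M N p u q) {s. A s} \<le> B ^ M / c"
proof (rule markov_pmf[where F = "\<lambda>s. \<Prod>l<M. ennreal (g (row s l))"])
  show "\<And>s. A s \<Longrightarrow> ennreal c \<le> (\<Prod>l<M. ennreal (g (row s l)))"
    using g by (subst prod_ennreal) (auto simp: less_imp_le intro!: ennreal_leI A)
  have R0: "RE N p u q g \<ge> 0" using g by (intro RE_nonneg less_imp_le)
  have "(\<integral>\<^sup>+s. (\<Prod>l<M. ennreal (g (row s l))) \<partial>gt_pmf M N p u q) = ennreal (RE N p u q g) ^ M"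
    by (subst gt_factor) (simp add: rowE_RE g less_imp_le)
  also have "\<dots> = ennreal (RE N p u q g ^ M)" using R0 by (simp add: ennreal_power)
  also have "\<dots> \<le> ennreal (B ^ M)" using R0 B by (intro ennreal_leI power_mono) auto
  finally show "(\<integral>\<^sup>+s. (\<Prod>l<M. ennreal (g (row s l))) \<partial>gt_pmf M N p u q) \<le> ennreal (c * (B ^ M / c))"
    using c by simp
  show "c > 0" by fact
  show "B ^ M / c \<ge> 0" using R0 B c by auto
qed

definition vr :: "real \<Rightarrow> nat set \<Rightarrow> (nat \<Rightarrow> bool) \<times> (nat \<Rightarrow> bool) \<times> bool \<Rightarrow> real" where
  "vr \<psi> Sd r = (if Yr Sd r then -\<psi> else 1)"

definition sc :: "real \<Rightarrow> nat \<Rightarrow> nat set \<Rightarrow> gt_sample \<Rightarrow> nat \<Rightarrow> real" where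
  "sc \<psi> M Sd s k = (\<Sum>l<M. if fst s (l,k) then vr \<psi> Sd (row s l) else 0)"

lemma sc_exp: "exp (a * sc \<psi> M Sd s k) = (\<Prod>l<M. exp (a * ind (fst (row s l) k) * vr \<psi> Sd (row s l)))"
proof -
  have "a * sc \<psi> M Sd s k = (\<Sum>l<M. a * ind (fst (row s l) k) * vr \<psi> Sd (row s l))"
    unfolding sc_def sum_distrib_left by (intro sum.cong refl) (auto simp: ind_def row_def)
  thus ?thesis by (simp add: exp_sum)
qed

lemma bound_def:
  assumes p: "0 \<le> p" "p \<le> 1" and u: "0 \<le> u" "u \<le> 1" and q: "0 \<le> q" "q \<le> 1"
    and Sd: "Sd \<subseteq> {..<N}" and j: "j \<in> Sd" and lam: "lm \<ge> 0"
  shows "measure_pmf.prob (gt_pmf M N p u q) {s. sc \<psi> M Sd s j \<ge> t} \<le>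
     (1 + p * ((1-q) * (1 - (1-u)*p) ^ (card Sd - 1) * u * (exp lm - exp (-lm*\<psi>)) + exp (-lm*\<psi>) - 1)) ^ M / exp (lm * t)"
proof (rule chernoff_rows[where g = "\<lambda>r. exp (lm * ind (fst r j) * vr \<psi> Sd r)"])
  show "\<And>s. t \<le> sc \<psi> M Sd s j \<Longrightarrow> exp (lm * t) \<le> (\<Prod>l<M. exp (lm * ind (fst (row s l) j) * vr \<psi> Sd (row s l)))"
    using lam by (simp add: sc_exp[symmetric] mult_left_mono)
  have jN: "j < N" using Sd j by auto
  have eq: "exp (lm * ind (fst r j) * vr \<psi> Sd r) = 1 + (exp (-lm*\<psi>) - 1) * (case r of (x,d,w) \<Rightarrow> ind (x j))
     + (exp lm - exp (-lm*\<psi>)) * (case r of (x,d,w) \<Rightarrow> ind (x j) * ind (\<not> Yr Sd (x,d,w)))" for r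
    by (cases r) (auto simp: ind_def vr_def)
  show "RE N p u q (\<lambda>r. exp (lm * ind (fst r j) * vr \<psi> Sd r)) \<le>
     1 + p * ((1-q) * (1 - (1-u)*p) ^ (card Sd - 1) * u * (exp lm - exp (-lm*\<psi>)) + exp (-lm*\<psi>) - 1)"
    unfolding eq RE_add RE_cmult RE_const E3[OF p u q Sd j] E4[OF p u q jN]
    by (simp add: algebra_simps)
qed auto


definition hf :: "real \<Rightarrow> real \<Rightarrow> real \<Rightarrow> nat set \<Rightarrow> (nat \<Rightarrow> bool) \<times> (nat \<Rightarrow> bool) \<times> bool \<Rightarrow> real" where
  "hf lm \<psi> p Sd r = 1 - p + p * exp (-lm * vr \<psi> Sd r)"

lemma hf_pos: "0 \<le> p \<Longrightarrow> p \<le> 1 \<Longrightarrow> hf lm \<psi> p Sd r > 0"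
  unfolding hf_def
  by (cases "p = 0") (auto intro!: add_nonneg_pos mult_pos_pos)

lemma bound_Gc:
  assumes p: "0 \<le> p" "p \<le> 1" and u: "0 \<le> u" "u \<le> 1" and q: "0 \<le> q" "q \<le> 1"
    and Sd: "Sd \<subseteq> {..<N}" and c: "c > 0"
  shows "measure_pmf.prob (gt_pmf M N p u q) {s. c < (\<Prod>l<M. hf lm \<psi> p Sd (row s l))} \<le>
     (1 - p + p * ((1-q) * (1 - (1-u)*p) ^ card Sd * exp (-lm) + (1 - (1-q) * (1 - (1-u)*p) ^ card Sd) * exp (lm*\<psi>))) ^ M / c"
proof (rule chernoff_rows[where g = "hf lm \<psi> p Sd"])
  have eq: "hf lm \<psi> p Sd r = (1 - p + p * exp (lm*\<psi>)) + p * (exp (-lm) - exp (lm*\<psi>)) *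
      (case r of (x,d,w) \<Rightarrow> ind (\<not> Yr Sd (x,d,w)) * (\<Prod>k\<in>{}. (\<lambda>b. 1::real) (x k)))" for r
    by (cases r) (auto simp: hf_def vr_def ind_def algebra_simps)
  show "RE N p u q (hf lm \<psi> p Sd) \<le>
     1 - p + p * ((1-q) * (1 - (1-u)*p) ^ card Sd * exp (-lm) + (1 - (1-q) * (1 - (1-u)*p) ^ card Sd) * exp (lm*\<psi>))"
    unfolding eq RE_add RE_cmult RE_const
    by (subst E1[OF p u q Sd]) (auto simp: algebra_simps)
qed (auto simp: hf_pos p c less_imp_le)

lemma bound_BS:
  assumes p: "0 \<le> p" "p \<le> 1" and u: "0 \<le> u" "u \<le> 1" and q: "0 \<le> q" "q \<le> 1"
    and Sd: "Sd \<subseteq> {..<N}" and S: "S \<subseteq> {..<N}" "S \<inter> Sd = {}" and c: "c > 0" and lm: "lm \<ge> 0"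
  shows "measure_pmf.prob (gt_pmf M N p u q)
      {s. (\<forall>k\<in>S. sc \<psi> M Sd s k \<le> t) \<and> (\<Prod>l<M. hf lm \<psi> p Sd (row s l)) \<le> c}
     \<le> 1 ^ M / (exp (-lm * card S * t) / c ^ card S)"
proof (rule chernoff_rows[where g = "\<lambda>r. (\<Prod>k\<in>S. exp (-lm * ind (fst r k) * vr \<psi> Sd r)) / hf lm \<psi> p Sd r ^ card S"])
  have fS: "finite S" using S by (meson finite_lessThan finite_subset)
  show "\<And>r. 0 < (\<Prod>k\<in>S. exp (-lm * ind (fst r k) * vr \<psi> Sd r)) / hf lm \<psi> p Sd r ^ card S"
    using hf_pos[OF p] by (auto intro!: prod_pos divide_pos_pos)
  show "0 < exp (-lm * card S * t) / c ^ card S" using c by simp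
  fix s assume ev: "(\<forall>k\<in>S. sc \<psi> M Sd s k \<le> t) \<and> (\<Prod>l<M. hf lm \<psi> p Sd (row s l)) \<le> c"
  have Hpos: "(\<Prod>l<M. hf lm \<psi> p Sd (row s l)) > 0" by (intro prod_pos ballI hf_pos p)
  have "(\<Prod>l<M. (\<Prod>k\<in>S. exp (-lm * ind (fst (row s l) k) * vr \<psi> Sd (row s l))) / hf lm \<psi> p Sd (row s l) ^ card S)
      = (\<Prod>k\<in>S. \<Prod>l<M. exp (-lm * ind (fst (row s l) k) * vr \<psi> Sd (row s l))) / (\<Prod>l<M. hf lm \<psi> p Sd (row s l)) ^ card S"
    by (simp add: prod_dividef prod.swap[of _ S] prod_power_distrib)
  also have "(\<Prod>k\<in>S. \<Prod>l<M. exp (-lm * ind (fst (row s l) k) * vr \<psi> Sd (row s l))) = (\<Prod>k\<in>S. exp (-lm * sc \<psi> M Sd s k))"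
    by (intro prod.cong refl) (simp only: sc_exp)
  also have "\<dots> = exp (-lm * (\<Sum>k\<in>S. sc \<psi> M Sd s k))"
    using fS by (simp add: exp_sum sum_distrib_left)
  also have "exp (-lm * card S * t) \<le> \<dots>"
  proof -
    have "(\<Sum>k\<in>S. sc \<psi> M Sd s k) \<le> (\<Sum>k\<in>S. t)" using ev by (intro sum_mono) auto
    hence "lm * (\<Sum>k\<in>S. sc \<psi> M Sd s k) \<le> lm * (card S * t)" using lm by (intro mult_left_mono) auto
    thus ?thesis by simp
  qed
  ultimately show "exp (-lm * card S * t) / c ^ card S \<le>
     (\<Prod>l<M. (\<Prod>k\<in>S. exp (-lm * ind (fst (row s l) k) * vr \<psi> Sd (row s l))) / hf lm \<psi> p Sd (row s l) ^ card S)"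
    using ev Hpos c by (auto intro!: frac_le power_mono)
next
  define h1 where "h1 = 1 - p + p * exp (-lm)"
  define h2 where "h2 = 1 - p + p * exp (lm * \<psi>)"
  have h1: "h1 > 0" using hf_pos[OF p, of lm 0 "{}" "(\<lambda>_. False, \<lambda>_. False, False)"] by (simp add: h1_def hf_def vr_def Yr_def)
  have h2: "h2 > 0" using hf_pos[OF p, of lm \<psi> "{}" "(\<lambda>_. False, \<lambda>_. False, True)"]
    by (simp add: h2_def hf_def vr_def Yr_def)
  define f1 where "f1 = (\<lambda>b. exp (-lm * ind b))"
  define f2 where "f2 = (\<lambda>b. exp (lm * \<psi> * ind b))"
  have eq: "(\<Prod>k\<in>S. exp (-lm * ind (fst r k) * vr \<psi> Sd r)) / hf lm \<psi> p Sd r ^ card S =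
     (1 / h1 ^ card S) * (case r of (x,d,w) \<Rightarrow> ind (\<not> Yr Sd (x,d,w)) * (\<Prod>k\<in>S. f1 (x k)))
     + ((1 / h2 ^ card S) * (case r of (x,d,w) \<Rightarrow> (\<Prod>k\<in>S. f2 (x k)))
     - (1 / h2 ^ card S) * (case r of (x,d,w) \<Rightarrow> ind (\<not> Yr Sd (x,d,w)) * (\<Prod>k\<in>S. f2 (x k))))" for r
    by (cases r) (auto simp: hf_def vr_def ind_def f1_def f2_def h1_def h2_def mult_ac)
  have "RE N p u q (\<lambda>r. (\<Prod>k\<in>S. exp (-lm * ind (fst r k) * vr \<psi> Sd r)) / hf lm \<psi> p Sd r ^ card S) =
     (1 / h1 ^ card S) * ((1-q) * (1 - (1-u)*p) ^ card Sd * (p * f1 True + (1-p) * f1 False) ^ card S)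
     + ((1 / h2 ^ card S) * (p * f2 True + (1-p) * f2 False) ^ card S
     - (1 / h2 ^ card S) * ((1-q) * (1 - (1-u)*p) ^ card Sd * (p * f2 True + (1-p) * f2 False) ^ card S))"
    unfolding eq RE_add RE_diff RE_cmult
    by (subst E1[OF p u q Sd S], simp add: f1_def, subst E1[OF p u q Sd S], simp add: f2_def,
        subst E2[OF p u q S(1)], simp add: f2_def) simp
  also have "\<dots> = 1"
    using h1 h2 by (simp add: f1_def f2_def h1_def h2_def ind_def algebra_simps)
  finally show "RE N p u q (\<lambda>r. (\<Prod>k\<in>S. exp (-lm * ind (fst r k) * vr \<psi> Sd r)) / hf lm \<psi> p Sd r ^ card S) \<le> 1"
    by simp
qed


lemma fail_decomp:
  fixes f :: "nat \<Rightarrow> real"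
  assumes fail: "\<not> alg_succeeds N L Sd f" and small: "\<forall>j\<in>Sd. f j < t"
    and Sd: "Sd \<subseteq> {..<N}" and L: "1 \<le> L"
  shows "\<exists>S. S \<subseteq> {..<N} - Sd \<and> card S = (N - card Sd) - (L - 1) \<and> (\<forall>k\<in>S. f k \<le> t)"
proof -
  from fail obtain T d where T: "T \<in> top_sets N L f" and d: "d \<in> T" "d \<in> Sd"
    unfolding alg_succeeds_def by auto
  from T have TN: "T \<subseteq> {..<N}" and cT: "card T = L" and top: "\<forall>a\<in>T. \<forall>b\<in>{..<N} - T. f b \<le> f a"
    unfolding top_sets_def by auto
  have fT: "finite T" using TN by (meson finite_lessThan finite_subset)
  have "({..<N} - Sd) \<inter> T \<subseteq> T - {d}" using d by auto
  hence c1: "card (({..<N} - Sd) \<inter> T) \<le> L - 1"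
    using card_mono[OF _ \<open>({..<N} - Sd) \<inter> T \<subseteq> T - {d}\<close>] fT cT d by (simp add: card_Diff_singleton)
  have cND: "card ({..<N} - Sd) = N - card Sd" using Sd by (simp add: card_Diff_subset finite_subset)
  have "card (({..<N} - Sd) - T) = card ({..<N} - Sd) - card (({..<N} - Sd) \<inter> T)"
    by (metis card_Diff_subset_Int finite_Diff finite_Int finite_lessThan)
  hence "(N - card Sd) - (L - 1) \<le> card (({..<N} - Sd) - T)" using c1 cND by linarith
  then obtain S where S: "S \<subseteq> ({..<N} - Sd) - T" "card S = (N - card Sd) - (L - 1)"
    by (meson obtain_subset_with_card_n)
  have "\<forall>k\<in>S. f k \<le> t"
  proof
    fix k assume "k \<in> S"
    hence "f k \<le> f d" using top S d by auto
    thus "f k \<le> t" using small d by fastforce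
  qed
  thus ?thesis using S by blast
qed

lemma union_bound3:
  fixes P :: "'a pmf" and x a b :: real
  assumes "finite I" "finite J"
    and sub: "E \<subseteq> X \<union> (\<Union>i\<in>I. A i) \<union> (\<Union>j\<in>J. B j)"
    and X: "measure_pmf.prob P X \<le> x" and A: "\<And>i. i \<in> I \<Longrightarrow> measure_pmf.prob P (A i) \<le> a"
    and B: "\<And>j. j \<in> J \<Longrightarrow> measure_pmf.prob P (B j) \<le> b"
  shows "measure_pmf.prob P E \<le> x + card I * a + card J * b"
proof -
  have "measure_pmf.prob P E \<le> measure_pmf.prob P (X \<union> (\<Union>i\<in>I. A i) \<union> (\<Union>j\<in>J. B j))"
    using sub by (intro measure_pmf.finite_measure_mono) auto
  also have "\<dots> \<le> measure_pmf.prob P (X \<union> (\<Union>i\<in>I. A i)) + measure_pmf.prob P (\<Union>j\<in>J. B j)"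
    by (intro measure_Un_le) auto
  also have "\<dots> \<le> measure_pmf.prob P X + measure_pmf.prob P (\<Union>i\<in>I. A i) + measure_pmf.prob P (\<Union>j\<in>J. B j)"
    using measure_Un_le[of X "measure_pmf P" "\<Union>i\<in>I. A i"] by auto
  also have "\<dots> \<le> x + (\<Sum>i\<in>I. a) + (\<Sum>j\<in>J. b)"
  proof -
    have "measure_pmf.prob P (\<Union>i\<in>I. A i) \<le> (\<Sum>i\<in>I. measure_pmf.prob P (A i))"
      using assms(1) by (intro measure_pmf.finite_measure_subadditive_finite) auto
    also have "\<dots> \<le> (\<Sum>i\<in>I. a)" using A by (intro sum_mono) auto
    finally have 1: "measure_pmf.prob P (\<Union>i\<in>I. A i) \<le> (\<Sum>i\<in>I. a)" .
    have "measure_pmf.prob P (\<Union>j\<in>J. B j) \<le> (\<Sum>j\<in>J. measure_pmf.prob P (B j))"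
      using assms(2) by (intro measure_pmf.finite_measure_subadditive_finite) auto
    also have "\<dots> \<le> (\<Sum>j\<in>J. b)" using B by (intro sum_mono) auto
    finally have 2: "measure_pmf.prob P (\<Union>j\<in>J. B j) \<le> (\<Sum>j\<in>J. b)" .
    show ?thesis using 1 2 X by linarith
  qed
  finally show ?thesis by simp
qed






lemma exp_le_quad: "0 \<le> x \<Longrightarrow> x \<le> 1 \<Longrightarrow> exp x \<le> 1 + x + x^2"
  for x :: real using exp_bound by simp

lemma exp_neg_le_quad:
  fixes x :: real assumes x: "0 \<le> x" shows "exp (-x) \<le> 1 - x + x^2"
proof -
  have "exp (-x) = 1 / exp x" by (simp add: exp_minus field_simps)
  also have "\<dots> \<le> 1 / (1 + x)" using x by (intro divide_left_mono) (auto simp: add_pos_nonneg)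
  also have "\<dots> \<le> 1 - x + x^2"
  proof -
    have "1 \<le> (1 + x) * (1 - x + x^2)" using x by (simp add: algebra_simps power2_eq_square)
    thus ?thesis using x by (simp add: divide_le_eq mult.commute)
  qed
  finally show ?thesis .
qed

lemma pow_le_exp:
  fixes y :: real assumes "0 \<le> 1 + y" shows "(1 + y) ^ M \<le> exp (real M * y)"
proof -
  have "(1 + y) ^ M \<le> exp y ^ M" using assms by (intro power_mono) (auto simp: add.commute)
  thus ?thesis by (simp add: exp_of_nat_mult)
qed

lemma beta_pow:
  assumes K: "2 \<le> K" shows "exp (-1) \<le> (1 - 1 / real K) ^ (K - 1)"
proof -
  define n where "n = K - 1"
  have n: "n \<ge> 1" "real K = real n + 1" using K by (auto simp: n_def)
  have eq: "1 - 1 / real K = 1 / (1 + 1 / real n)" using n by (simp add: field_simps)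
  have "(1 + 1 / real n) ^ n \<le> exp (real n * (1 / real n))" by (rule pow_le_exp) simp
  also have "\<dots> = exp 1" using n by simp
  finally have le: "(1 + 1 / real n) ^ n \<le> exp 1" .
  have pos: "(1 + 1 / real n) ^ n > 0" by (intro zero_less_power) (auto simp: add_pos_nonneg)
  have "exp (-1) = 1 / exp (1::real)" by (simp add: exp_minus inverse_eq_divide)
  also have "\<dots> \<le> 1 / (1 + 1 / real n) ^ n" using le pos by (intro divide_left_mono) auto
  also have "\<dots> = (1 - 1 / real K) ^ (K - 1)" unfolding eq n_def[symmetric] by (simp add: power_divide)
  finally show ?thesis .
qed

lemma phi_bound:
  fixes \<rho> lm \<psi> :: real
  assumes "0 \<le> \<rho>" "\<rho> \<le> 1" "0 \<le> lm" "lm \<le> 1" "0 \<le> \<psi>"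
  shows "\<rho> * exp lm + (1 - \<rho>) * exp (-lm*\<psi>) - 1 \<le> lm * (\<rho> - (1-\<rho>)*\<psi>) + lm^2 * (1 + \<psi>^2)"
proof -
  have 1: "\<rho> * exp lm \<le> \<rho> * (1 + lm + lm^2)" using assms exp_le_quad[of lm] by (intro mult_left_mono) auto
  have 2: "(1-\<rho>) * exp (-lm*\<psi>) \<le> (1-\<rho>) * (1 - lm*\<psi> + (lm*\<psi>)^2)"
    using assms exp_neg_le_quad[of "lm*\<psi>"] by (intro mult_left_mono) auto
  have 3: "\<rho> * lm^2 + (1-\<rho>) * (lm*\<psi>)^2 \<le> lm^2 * (1 + \<psi>^2)"
  proof -
    have "\<rho> * lm^2 \<le> lm^2" using assms by (simp add: mult_left_le_one_le)
    moreover have "(1-\<rho>) * (lm*\<psi>)^2 \<le> 1 * (lm*\<psi>)^2" using assms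
      by (intro mult_right_mono) auto
    ultimately show ?thesis by (simp add: algebra_simps)
  qed
  show ?thesis using 1 2 3 by (simp add: algebra_simps power_mult_distrib)
qed

lemma delta_bound:
  fixes \<rho> lm \<psi> :: real
  assumes "0 \<le> \<rho>" "\<rho> \<le> 1" "0 \<le> lm" "lm \<le> 1" "0 \<le> \<psi>" "lm * \<psi> \<le> 1"
  shows "lm * (\<rho> - (1-\<rho>)*\<psi>) - lm^2 * (1 + \<psi>^2) \<le> 1 - \<rho> * exp (-lm) - (1 - \<rho>) * exp (lm*\<psi>)"
proof -
  have 1: "\<rho> * exp (-lm) \<le> \<rho> * (1 - lm + lm^2)" using assms exp_neg_le_quad[of lm] by (intro mult_left_mono) auto
  have 2: "(1-\<rho>) * exp (lm*\<psi>) \<le> (1-\<rho>) * (1 + lm*\<psi> + (lm*\<psi>)^2)"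
    using assms exp_le_quad[of "lm*\<psi>"] by (intro mult_left_mono) auto
  have 3: "\<rho> * lm^2 + (1-\<rho>) * (lm*\<psi>)^2 \<le> lm^2 * (1 + \<psi>^2)"
  proof -
    have "\<rho> * lm^2 \<le> lm^2" using assms by (simp add: mult_left_le_one_le)
    moreover have "(1-\<rho>) * (lm*\<psi>)^2 \<le> 1 * (lm*\<psi>)^2" using assms
      by (intro mult_right_mono) auto
    ultimately show ?thesis by (simp add: algebra_simps)
  qed
  show ?thesis using 1 2 3 by (simp add: algebra_simps power_mult_distrib)
qed


definition psib :: "real \<Rightarrow> real" where "psib u = 2*u/(1-2*u)"
definition g0 :: "real \<Rightarrow> real" where "g0 u = (1/2 - u) / (2 * exp 1)"
definition lamc :: "real \<Rightarrow> real" where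
  "lamc u = min (1/(1 + psib u)) (g0 u / (8 * (1 + psib u ^ 2)))"
definition kap :: "real \<Rightarrow> real" where "kap u = lamc u * g0 u / 8"

lemma consts_pos:
  assumes "0 \<le> u" "u < 1/2"
  shows "psib u \<ge> 0" "g0 u > 0" "lamc u > 0" "lamc u \<le> 1" "kap u > 0"
    "lamc u * psib u \<le> 1" "lamc u * (1 + psib u ^ 2) \<le> g0 u / 8"
proof -
  show ps: "psib u \<ge> 0" using assms by (simp add: psib_def)
  show g: "g0 u > 0" using assms by (simp add: g0_def)
  have a: "1/(1 + psib u) > 0" using ps by simp
  have b: "g0 u / (8 * (1 + psib u ^ 2)) > 0" using g by (simp add: add_pos_nonneg)
  show l: "lamc u > 0" using a b by (simp add: lamc_def)
  have "1/(1 + psib u) \<le> 1" using ps by simp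
  thus "lamc u \<le> 1" by (simp add: lamc_def)
  show "kap u > 0" using l g by (simp add: kap_def)
  have "lamc u * psib u \<le> 1/(1 + psib u) * psib u" using ps by (intro mult_right_mono) (auto simp: lamc_def)
  also have "\<dots> \<le> 1" using ps by (simp add: field_simps)
  finally show "lamc u * psib u \<le> 1" .
  have "lamc u * (1 + psib u ^ 2) \<le> g0 u / (8 * (1 + psib u ^ 2)) * (1 + psib u ^ 2)"
    by (intro mult_right_mono) (auto simp: lamc_def add_nonneg_nonneg)
  also have "\<dots> = g0 u / 8"
  proof -
    have "1 + psib u ^ 2 > 0" by (simp add: add_pos_nonneg)
    thus ?thesis by (simp add: field_simps)
  qed
  finally show "lamc u * (1 + psib u ^ 2) \<le> g0 u / 8" .
qed


lemma main_general:
  fixes u q \<psi> :: real and N K L M :: nat and Sd :: "nat set"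
  assumes u: "0 \<le> u" "u < 1/2" and q: "0 \<le> q" "q < 1/2" and \<psi>: "0 \<le> \<psi>" "\<psi> \<le> psib u"
    and Sd: "Sd \<subseteq> {..<N}" "card Sd = K" and K: "K \<ge> 2" and L: "1 \<le> L" "L \<le> N - K"
  defines "p \<equiv> 1 / ((1-u) * real K)"
  shows "measure_pmf.prob (gt_pmf M N p u q) {s. \<not> alg_succeeds N L Sd (sc \<psi> M Sd s)}
     \<le> (1 + real K) * exp (- kap u * (real M * p))
       + real ((N - K) choose (L - 1)) * exp (- kap u * (real (N - K - (L - 1)) * (real M * p)))"
proof -
  note cs = consts_pos[OF u]
  define lm where "lm = lamc u"
  define R where "R = 1 + psib u ^ 2"
  define \<kappa> where "\<kappa> = kap u"
  define m where "m = N - K - (L - 1)"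
  define \<beta> where "\<beta> = 1 - (1-u)*p"
  define \<rho>0 where "\<rho>0 = (1-q) * \<beta> ^ K"
  define \<rho>d where "\<rho>d = (1-q) * \<beta> ^ (K - 1) * u"
  define \<alpha>d where "\<alpha>d = \<rho>d - (1-\<rho>d)*\<psi>"
  define \<alpha>0 where "\<alpha>0 = \<rho>0 - (1-\<rho>0)*\<psi>"
  define g where "g = \<alpha>0 - \<alpha>d"
  define T where "T = \<alpha>d + g/2"
  define Cc where "Cc = lm*T + lm*g/4"
  define Mp where "Mp = real M * p"
  define t where "t = Mp * T"
  define c where "c = exp (- Mp * Cc)"
  have Kr: "real K \<ge> 2" using K by simp
  have up: "(1-u) * p = 1 / real K" using u Kr by (simp add: p_def)
  have p0: "0 \<le> p" using u Kr by (simp add: p_def)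
  have p1: "p \<le> 1"
  proof -
    have "(1/2) * 2 \<le> (1-u) * real K" using u Kr by (intro mult_mono) auto
    thus ?thesis by (simp add: p_def)
  qed
  have u1: "0 \<le> u" "u \<le> 1" and q1: "0 \<le> q" "q \<le> 1" using u q by auto
  have \<beta>: "\<beta> = 1 - 1 / real K" by (simp add: \<beta>_def up)
  have \<beta>h: "\<beta> \<ge> 1/2" "\<beta> \<le> 1" using Kr by (auto simp: \<beta> field_simps)
  have Mp0: "Mp \<ge> 0" using p0 by (simp add: Mp_def)
  have \<kappa>: "\<kappa> = lm * g0 u / 8" by (simp add: \<kappa>_def kap_def lm_def)
  have lm: "0 < lm" "lm \<le> 1" "lm * \<psi> \<le> 1" "lm * R \<le> g0 u / 8"
    using cs \<psi> by (auto simp: lm_def R_def intro: order_trans[OF mult_left_mono[OF \<psi>(2)]])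
  have R: "1 + \<psi>^2 \<le> R" using \<psi> by (simp add: R_def power_mono)
  have \<beta>K: "\<beta> ^ K = \<beta> * \<beta> ^ (K - 1)" using K by (metis Suc_diff_le le_trans one_le_numeral power_Suc diff_Suc_1 Suc_le_eq less_eq_Suc_le)
  have \<beta>pos: "\<beta> ^ (K-1) \<ge> 0" "\<beta> ^ (K-1) \<le> 1" using \<beta>h by (auto simp: power_le_one)
  have \<rho>d: "0 \<le> \<rho>d" "\<rho>d \<le> 1"
  proof -
    show "0 \<le> \<rho>d" using \<beta>pos u q by (simp add: \<rho>d_def)
    have "(1-q) * \<beta> ^ (K-1) * u \<le> 1 * 1 * 1" using \<beta>pos u q by (intro mult_mono) auto
    thus "\<rho>d \<le> 1" by (simp add: \<rho>d_def)
  qed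
  have \<rho>0: "0 \<le> \<rho>0" "\<rho>0 \<le> 1"
  proof -
    show "0 \<le> \<rho>0" using \<beta>h q by (simp add: \<rho>0_def)
    have "(1-q) * \<beta> ^ K \<le> 1 * 1" using \<beta>h q by (intro mult_mono) (auto simp: power_le_one)
    thus "\<rho>0 \<le> 1" by (simp add: \<rho>0_def)
  qed
  have gap: "\<rho>0 - \<rho>d = (1-q) * \<beta> ^ (K-1) * (\<beta> - u)" by (simp add: \<rho>0_def \<rho>d_def \<beta>K algebra_simps)
  have g_eq: "g = (1 + \<psi>) * (\<rho>0 - \<rho>d)" by (simp add: g_def \<alpha>0_def \<alpha>d_def algebra_simps)
  have gge: "g \<ge> g0 u"
  proof -
    have e: "exp (-1) \<le> \<beta> ^ (K-1)" using beta_pow[OF K] by (simp add: \<beta>)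
    have "g0 u = (1/2) * exp (-1) * (1/2 - u)" by (simp add: g0_def exp_minus field_simps)
    also have "\<dots> \<le> (1-q) * \<beta> ^ (K-1) * (\<beta> - u)"
      using e q u \<beta>h by (intro mult_mono) auto
    also have "\<dots> = \<rho>0 - \<rho>d" by (simp add: gap)
    also have "\<dots> \<le> g"
    proof -
      have "\<rho>0 - \<rho>d \<ge> 0" using gap \<beta>pos q u \<beta>h by simp
      thus ?thesis unfolding g_eq using \<psi> mult_left_mono[of \<rho>d \<rho>0 \<psi>] by (simp add: algebra_simps)
    qed
    finally show ?thesis .
  qed
  have g0p: "g0 u > 0" using cs by simp
  have \<kappa>0: "\<kappa> \<ge> 0" using cs by (simp add: \<kappa>_def)
  have PA: "measure_pmf.prob (gt_pmf M N p u q) {s. t \<le> sc \<psi> M Sd s j} \<le> exp (- \<kappa> * Mp)" if j: "j \<in> Sd" for j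
  proof -
    define \<phi> where "\<phi> = \<rho>d * exp lm + (1 - \<rho>d) * exp (-lm*\<psi>) - 1"
    have b: "measure_pmf.prob (gt_pmf M N p u q) {s. t \<le> sc \<psi> M Sd s j} \<le> (1 + p * \<phi>) ^ M / exp (lm * t)"
      using bound_def[OF p0 p1 u1 q1 Sd(1) j less_imp_le[OF lm(1)], where \<psi>=\<psi> and M=M and t=t]
      by (simp add: \<phi>_def \<rho>d_def \<beta>_def Sd(2) algebra_simps)
    have \<phi>1: "\<phi> \<ge> -1" using \<rho>d by (simp add: \<phi>_def)
    have "0 \<le> 1 + p * \<phi>"
    proof -
      have "p * (-1) \<le> p * \<phi>" using \<phi>1 p0 by (intro mult_left_mono) auto
      thus ?thesis using p1 by simp
    qed
    hence "(1 + p * \<phi>) ^ M \<le> exp (real M * (p * \<phi>))" by (rule pow_le_exp)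
    hence "(1 + p * \<phi>) ^ M / exp (lm * t) \<le> exp (real M * (p * \<phi>)) / exp (lm * t)"
      by (intro divide_right_mono) auto
    also have "\<dots> = exp (Mp * (\<phi> - lm * T))"
      by (simp add: Mp_def t_def exp_diff[symmetric] algebra_simps)
    also have "\<dots> \<le> exp (- \<kappa> * Mp)"
    proof -
      have "\<phi> \<le> lm * \<alpha>d + lm^2 * (1 + \<psi>^2)"
        using phi_bound[OF \<rho>d lm(1)[THEN less_imp_le] lm(2) \<psi>(1)] by (simp add: \<phi>_def \<alpha>d_def)
      also have "lm^2 * (1 + \<psi>^2) \<le> lm * (lm * R)" using R lm by (simp add: power2_eq_square mult_left_mono)
      finally have "\<phi> - lm * T \<le> lm * (lm * R) - lm * g / 2" by (simp add: T_def algebra_simps)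
      also have "\<dots> \<le> lm * (g0 u / 8) - lm * g0 u / 2"
        using lm gge by (intro diff_mono mult_left_mono) auto
      also have "\<dots> \<le> - \<kappa>" using \<kappa> lm g0p by simp
      finally have "\<phi> - lm * T \<le> - \<kappa>" .
      hence "Mp * (\<phi> - lm * T) \<le> Mp * (- \<kappa>)" using Mp0 by (intro mult_left_mono) auto
      thus ?thesis by (simp add: mult.commute)
    qed
    finally show ?thesis using b by linarith
  qed
  \<comment> \<open>bound for the event that few tests are negative\<close>
  have PG: "measure_pmf.prob (gt_pmf M N p u q) {s. c < (\<Prod>l<M. hf lm \<psi> p Sd (row s l))} \<le> exp (- \<kappa> * Mp)"
  proof -
    define \<delta> where "\<delta> = 1 - \<rho>0 * exp (-lm) - (1 - \<rho>0) * exp (lm*\<psi>)"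
    have b: "measure_pmf.prob (gt_pmf M N p u q) {s. c < (\<Prod>l<M. hf lm \<psi> p Sd (row s l))} \<le> (1 + p * (-\<delta>)) ^ M / c"
      using bound_Gc[OF p0 p1 u1 q1 Sd(1), where c = c and lm = lm and \<psi> = \<psi> and M = M]
      by (simp add: \<delta>_def \<rho>0_def \<beta>_def Sd(2) c_def algebra_simps)
    have "0 \<le> 1 + p * (-\<delta>)"
    proof -
      have "0 \<le> \<rho>0 * exp (-lm) + (1 - \<rho>0) * exp (lm*\<psi>)" using \<rho>0 by simp
      hence "p * (-1) \<le> p * (-\<delta>)" using p0 by (intro mult_left_mono) (auto simp: \<delta>_def)
      thus ?thesis using p1 by simp
    qed
    hence "(1 + p * (-\<delta>)) ^ M \<le> exp (real M * (p * (-\<delta>)))" by (rule pow_le_exp)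
    hence "(1 + p * (-\<delta>)) ^ M / c \<le> exp (real M * (p * (-\<delta>))) / c"
      using c_def by (intro divide_right_mono) auto
    also have "\<dots> = exp (real M * (p * (-\<delta>)) - (- Mp * Cc))"
      unfolding c_def by (rule exp_diff[symmetric])
    also have "\<dots> = exp (Mp * (Cc - \<delta>))"
      by (simp add: Mp_def algebra_simps)
    also have "\<dots> \<le> exp (- \<kappa> * Mp)"
    proof -
      have "lm * \<alpha>0 - lm^2 * (1 + \<psi>^2) \<le> \<delta>"
        using delta_bound[OF \<rho>0 lm(1)[THEN less_imp_le] lm(2) \<psi>(1) lm(3)] by (simp add: \<delta>_def \<alpha>0_def)
      moreover have "lm^2 * (1 + \<psi>^2) \<le> lm * (lm * R)" using R lm by (simp add: power2_eq_square mult_left_mono)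
      moreover have "Cc = lm * \<alpha>0 - lm * g / 4" unfolding Cc_def T_def g_def by (simp add: field_simps)
      ultimately have "Cc - \<delta> \<le> lm * (lm * R) - lm * g / 4" by (simp add: algebra_simps)
      also have "\<dots> \<le> lm * (g0 u / 8) - lm * g0 u / 4"
        using lm gge by (intro diff_mono mult_left_mono) auto
      also have "\<dots> \<le> - \<kappa>" using \<kappa> lm g0p by simp
      finally have "Cc - \<delta> \<le> - \<kappa>" .
      hence "Mp * (Cc - \<delta>) \<le> Mp * (- \<kappa>)" using Mp0 by (intro mult_left_mono) auto
      thus ?thesis by (simp add: mult.commute)
    qed
    finally show ?thesis using b by linarith
  qed
  have PB: "measure_pmf.prob (gt_pmf M N p u q)
      {s. (\<forall>k\<in>S. sc \<psi> M Sd s k \<le> t) \<and> (\<Prod>l<M. hf lm \<psi> p Sd (row s l)) \<le> c}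
     \<le> exp (- \<kappa> * (real m * Mp))" if S: "S \<subseteq> {..<N} - Sd" "card S = m" for S
  proof -
    have S': "S \<subseteq> {..<N}" "S \<inter> Sd = {}" using S by auto
    have b: "measure_pmf.prob (gt_pmf M N p u q)
      {s. (\<forall>k\<in>S. sc \<psi> M Sd s k \<le> t) \<and> (\<Prod>l<M. hf lm \<psi> p Sd (row s l)) \<le> c}
     \<le> 1 ^ M / (exp (-lm * card S * t) / c ^ card S)"
      by (rule bound_BS[OF p0 p1 u1 q1 Sd(1) S' _ lm(1)[THEN less_imp_le]]) (simp add: c_def)
    also have "\<dots> = c ^ card S / exp (-lm * card S * t)" by simp
    also have "c ^ card S = exp (real m * (- Mp * Cc))" unfolding c_def S(2) by (rule exp_of_nat_mult[symmetric])
    also have "exp (real m * (- Mp * Cc)) / exp (-lm * card S * t) = exp (real m * (- Mp * Cc) - (-lm * card S * t))"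
      by (rule exp_diff[symmetric])
    also have "\<dots> = exp (real m * Mp * (lm * T - Cc))"
      by (simp add: S(2) t_def algebra_simps)
    also have "\<dots> \<le> exp (- \<kappa> * (real m * Mp))"
    proof -
      have "lm * T - Cc = - (lm * g / 4)" by (simp add: Cc_def)
      also have "\<dots> \<le> - (lm * g0 u / 4)" using lm gge by (simp add: mult_left_mono divide_right_mono)
      also have "\<dots> \<le> - \<kappa>" using \<kappa> mult_pos_pos[OF lm(1) g0p] by simp
      finally have "lm * T - Cc \<le> - \<kappa>" .
      hence "(real m * Mp) * (lm * T - Cc) \<le> (real m * Mp) * (- \<kappa>)" using Mp0 by (intro mult_left_mono) auto
      thus ?thesis by (simp add: mult.commute mult.left_commute)
    qed
    finally show ?thesis .
  qed
  define \<S> where "\<S> = {S. S \<subseteq> {..<N} - Sd \<and> card S = m}"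
  have fin\<S>: "finite \<S>"
    by (rule finite_subset[of _ "Pow {..<N}"]) (auto simp: \<S>_def)
  have card\<S>: "card \<S> = (N - K) choose (L - 1)"
  proof -
    have "card \<S> = card ({..<N} - Sd) choose m" unfolding \<S>_def by (rule n_subsets) auto
    also have "card ({..<N} - Sd) = N - K" using Sd by (simp add: card_Diff_subset finite_subset)
    also have "(N - K) choose m = (N - K) choose (L - 1)"
      unfolding m_def using L by (intro binomial_symmetric[symmetric]) auto
    finally show ?thesis .
  qed
  have finSd: "finite Sd" using Sd(1) by (meson finite_lessThan finite_subset)
  have sub: "{s. \<not> alg_succeeds N L Sd (sc \<psi> M Sd s)} \<subseteq>
      {s. c < (\<Prod>l<M. hf lm \<psi> p Sd (row s l))} \<union> (\<Union>j\<in>Sd. {s. t \<le> sc \<psi> M Sd s j}) \<union>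
      (\<Union>S\<in>\<S>. {s. (\<forall>k\<in>S. sc \<psi> M Sd s k \<le> t) \<and> (\<Prod>l<M. hf lm \<psi> p Sd (row s l)) \<le> c})"
  proof
    fix s assume "s \<in> {s. \<not> alg_succeeds N L Sd (sc \<psi> M Sd s)}"
    hence fail: "\<not> alg_succeeds N L Sd (sc \<psi> M Sd s)" by simp
    show "s \<in> {s. c < (\<Prod>l<M. hf lm \<psi> p Sd (row s l))} \<union> (\<Union>j\<in>Sd. {s. t \<le> sc \<psi> M Sd s j}) \<union>
      (\<Union>S\<in>\<S>. {s. (\<forall>k\<in>S. sc \<psi> M Sd s k \<le> t) \<and> (\<Prod>l<M. hf lm \<psi> p Sd (row s l)) \<le> c})"
    proof (cases "c < (\<Prod>l<M. hf lm \<psi> p Sd (row s l))")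
      case True thus ?thesis by simp
    next
      case H: False
      show ?thesis
      proof (cases "\<exists>j\<in>Sd. t \<le> sc \<psi> M Sd s j")
        case True thus ?thesis by auto
      next
        case False
        hence "\<forall>j\<in>Sd. sc \<psi> M Sd s j < t" by auto
        from fail_decomp[OF fail this Sd(1) L(1)] obtain S where
          S: "S \<subseteq> {..<N} - Sd" "card S = N - card Sd - (L - 1)" "\<forall>k\<in>S. sc \<psi> M Sd s k \<le> t" by blast
        have "S \<in> \<S>" using S Sd(2) by (simp add: \<S>_def m_def)
        thus ?thesis using S H by auto
      qed
    qed
  qed
  have "measure_pmf.prob (gt_pmf M N p u q) {s. \<not> alg_succeeds N L Sd (sc \<psi> M Sd s)}
     \<le> exp (- \<kappa> * Mp) + card Sd * exp (- \<kappa> * Mp) + card \<S> * exp (- \<kappa> * (real m * Mp))"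
    by (rule union_bound3[OF finSd fin\<S> sub PG PA PB]) (auto simp: \<S>_def)
  also have "\<dots> = (1 + real K) * exp (- kap u * (real M * p))
       + real ((N - K) choose (L - 1)) * exp (- kap u * (real (N - K - (L - 1)) * (real M * p)))"
    by (simp add: card\<S> Sd(2) \<kappa>_def Mp_def m_def algebra_simps)
  finally show ?thesis .
qed


lemma card_sum_ind: fixes M :: nat shows "real (card {l \<in> {..<M}. P l}) = (\<Sum>l<M. if P l then 1 else 0)"
proof -
  have "(\<Sum>l<M. if P l then 1 else 0) = (\<Sum>l\<in>{l\<in>{..<M}. P l}. 1::real)"
    by (rule sum.inter_filter[symmetric]) simp
  thus ?thesis by simp
qed

lemma exp_nln: fixes x :: real shows "x > 0 \<Longrightarrow> exp (of_nat n * ln x) = x ^ n"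
  using exp_of_nat_mult[of n "ln x"] by simp

lemma roal_sc: "roal_score M Sd s = sc 0 M Sd s"
proof
  fix k
  show "roal_score M Sd s k = sc 0 M Sd s k"
    unfolding roal_score_def sc_def card_sum_ind
    by (intro sum.cong refl) (auto simp: vr_def Yr_def gt_outcome_def row_def split: prod.splits)
qed

lemma coal_sc: "coal_score \<psi> M Sd s = sc \<psi> M Sd s"
proof
  fix k
  show "coal_score \<psi> M Sd s k = sc \<psi> M Sd s k"
    unfolding coal_score_def sc_def card_sum_ind sum_distrib_left sum_subtractf[symmetric]
    by (intro sum.cong refl) (auto simp: vr_def Yr_def gt_outcome_def row_def split: prod.splits)
qed

lemma final_arith:
  fixes K C :: nat and Mp mr \<kappa> c0 :: real
  assumes K: "K \<ge> 2" and C: "C \<ge> 1" and c0: "c0 > 0"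
    and h1: "\<kappa> * Mp \<ge> (c0 + 3) * ln (real K)"
    and h2: "\<kappa> * (mr * Mp) \<ge> (c0 + 2) * ln (real K * real C)"
  shows "(1 + real K) * exp (- \<kappa> * Mp) + real C * exp (- \<kappa> * (mr * Mp))
     < exp (- c0 * ln (real K * real C)) + exp (- c0 * ln (real K))"
proof -
  have Kr: "real K \<ge> 2" using K by simp
  have Cr: "real C \<ge> 1" using C by simp
  define lg where "lg = ln (real K * real C)"
  have KC: "real K * real C \<ge> 2" using Kr Cr by (metis mult_mono mult_1_right le_numeral_extra(1) order_trans zero_le_numeral)
  have "exp (- \<kappa> * Mp) \<le> exp (- ((c0 + 3) * ln (real K)))" using h1 by simp
  also have "\<dots> = exp (- c0 * ln (real K)) * exp (- 3 * ln (real K))" by (simp add: exp_add[symmetric] algebra_simps)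
  also have "exp (- 3 * ln (real K)) = 1 / real K ^ 3"
    using Kr exp_nln[of "real K" 3] by (simp add: exp_minus inverse_eq_divide)
  finally have e1: "exp (- \<kappa> * Mp) \<le> exp (- c0 * ln (real K)) * (1 / real K ^ 3)" .
  have "exp (- \<kappa> * (mr * Mp)) \<le> exp (- ((c0 + 2) * lg))" using h2 by (simp add: lg_def)
  also have "\<dots> = exp (- c0 * lg) * exp (- 2 * lg)" by (simp add: exp_add[symmetric] algebra_simps)
  also have "exp (- 2 * lg) = 1 / (real K * real C) ^ 2"
  proof -
    have K0: "0 < K" "0 < C" using K C by auto
    thus ?thesis using exp_nln[of "real K * real C" 2] by (simp add: lg_def exp_minus inverse_eq_divide)
  qed
  finally have e2: "exp (- \<kappa> * (mr * Mp)) \<le> exp (- c0 * lg) * (1 / (real K * real C) ^ 2)" .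
  have r1: "(1 + real K) * (1 / real K ^ 3) \<le> 1/2"
  proof -
    have "2 * 2 \<le> real K * real K" using Kr by (intro mult_mono) auto
    hence b: "real K * (2 * 2) \<le> real K * (real K * real K)" using Kr by (intro mult_left_mono) auto
    have "real K ^ 3 = real K * (real K * real K)" by (simp add: power3_eq_cube)
    with b have "real K * 4 \<le> real K ^ 3" by simp
    moreover have "2 * (1 + real K) \<le> real K * 4" using Kr by simp
    ultimately have "2 * (1 + real K) \<le> real K ^ 3" by (rule order_trans[rotated])
    moreover have "real K ^ 3 > 0" using Kr by simp
    ultimately show ?thesis by (simp add: field_simps)
  qed
  have r2: "real C * (1 / (real K * real C) ^ 2) \<le> 1/2"
  proof -
    have "2 * (real K * real C) \<le> (real K * real C) * (real K * real C)"
      using KC by (intro mult_right_mono) auto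
    moreover have "real C \<le> real K * real C" using Kr Cr by simp
    ultimately have "2 * real C \<le> (real K * real C) ^ 2" by (simp add: power2_eq_square)
    moreover have "(real K * real C) ^ 2 > 0" using KC by (intro zero_less_power) linarith
    ultimately show ?thesis by (simp add: field_simps)
  qed
  have p1: "exp (- c0 * ln (real K)) > 0" "exp (- c0 * lg) > 0" by auto
  have "(1 + real K) * exp (- \<kappa> * Mp) \<le> (1 + real K) * (exp (- c0 * ln (real K)) * (1 / real K ^ 3))"
    using e1 Kr by (intro mult_left_mono) auto
  also have "\<dots> = exp (- c0 * ln (real K)) * ((1 + real K) * (1 / real K ^ 3))" by simp
  also have "\<dots> \<le> exp (- c0 * ln (real K)) * (1/2)" using r1 by (intro mult_left_mono) auto
  finally have a: "(1 + real K) * exp (- \<kappa> * Mp) \<le> exp (- c0 * ln (real K)) * (1/2)" .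
  have "real C * exp (- \<kappa> * (mr * Mp)) \<le> real C * (exp (- c0 * lg) * (1 / (real K * real C) ^ 2))"
    using e2 by (intro mult_left_mono) auto
  also have "\<dots> = exp (- c0 * lg) * (real C * (1 / (real K * real C) ^ 2))" by simp
  also have "\<dots> \<le> exp (- c0 * lg) * (1/2)" using r2 by (intro mult_left_mono) auto
  finally have b: "real C * exp (- \<kappa> * (mr * Mp)) \<le> exp (- c0 * lg) * (1/2)" .
  show ?thesis using a b p1 unfolding lg_def by linarith
qed


lemma core:
  fixes u q c0 \<psi> :: real and N K L M :: nat and Sd :: "nat set"
  assumes u: "0 \<le> u" "u < 1/2" and q: "0 \<le> q" "q < 1/2" and c0: "c0 > 0"
    and \<psi>: "0 \<le> \<psi>" "\<psi> \<le> psib u"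
    and K: "K > 1" and Sd: "Sd \<subseteq> {..<N}" "card Sd = K" and L: "1 \<le> L" "L \<le> N - K"
    and M: "real M \<ge> (1 + c0) * (real K * (1 - u) / ((1 - q) * (1 - u / (1 - (1 - u) * (1 / ((1 - u) * real K))))^2 * (1 + \<psi>))) *
                  ((1 + psib u) * (c0 + 2) / kap u * ln (real K * real ((N - K) choose (L - 1))) / (real (N - K) - real (L - 1))
                   + (1 + psib u) * (c0 + 3) / kap u * ln (real K))"
  shows "measure_pmf.prob (gt_pmf M N (1 / ((1 - u) * real K)) u q) {s. \<not> alg_succeeds N L Sd (sc \<psi> M Sd s)}
     < exp (- c0 * ln (real K * real ((N - K) choose (L - 1)))) + exp (- c0 * ln (real K))"
proof -
  note cs = consts_pos[OF u]
  define p where "p = 1 / ((1 - u) * real K)"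
  define C where "C = (N - K) choose (L - 1)"
  define lg where "lg = ln (real K * real C)"
  define \<kappa> where "\<kappa> = kap u"
  define D where "D = 1 + psib u"
  define mr where "mr = real (N - K) - real (L - 1)"
  define \<gamma> where "\<gamma> = u / (1 - (1 - u) * p)"
  define X where "X = D * (c0 + 2) / \<kappa> * lg / mr + D * (c0 + 3) / \<kappa> * ln (real K)"
  have Kr: "real K \<ge> 2" using K by simp
  have \<kappa>: "\<kappa> > 0" using cs by (simp add: \<kappa>_def)
  have D: "D \<ge> 1" using cs by (simp add: D_def)
  have mr: "mr = real (N - K - (L - 1))" "mr \<ge> 1" using L by (auto simp: mr_def)
  have C1: "C \<ge> 1" using L by (simp add: C_def Suc_le_eq)
  have lg0: "lg \<ge> 0"
  proof -
    have "real K * real C \<ge> 1 * 1" using Kr C1 by (intro mult_mono) auto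
    thus ?thesis by (simp add: lg_def)
  qed
  have lnK: "ln (real K) \<ge> 0" using Kr by simp
  have up: "(1 - u) * p = 1 / real K" using u Kr by (simp add: p_def)
  have \<gamma>: "0 \<le> \<gamma>" "\<gamma> < 1"
  proof -
    have b: "1 - (1 - u) * p \<ge> 1/2" unfolding up using Kr by (simp add: field_simps)
    show "0 \<le> \<gamma>" using u b by (simp add: \<gamma>_def)
    have "u < 1 - (1 - u) * p" using u b by linarith
    thus "\<gamma> < 1" using b by (simp add: \<gamma>_def divide_less_eq_1)
  qed
  define den where "den = (1 - q) * (1 - \<gamma>)^2 * (1 + \<psi>)"
  have den: "den \<le> D" "den > 0"
  proof -
    have "(1 - q) * (1 - \<gamma>)^2 \<le> 1 * 1" using q \<gamma> by (intro mult_mono) (auto simp: power_le_one)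
    hence "(1 - q) * (1 - \<gamma>)^2 * (1 + \<psi>) \<le> 1 * D" using \<psi> D q by (intro mult_mono) (auto simp: D_def)
    thus "den \<le> D" by (simp add: den_def)
    show "den > 0" using q \<gamma> \<psi> by (simp add: den_def)
  qed
  have X0: "X \<ge> 0" using D \<kappa> c0 lg0 mr lnK by (simp add: X_def)
  have Mp: "real M * p \<ge> X / D"
  proof -
    have "real M \<ge> (1 + c0) * (real K * (1 - u) / den) * X"
      using M by (simp add: den_def \<gamma>_def p_def X_def D_def \<kappa>_def C_def lg_def mr_def)
    moreover have "(1 + c0) * (real K * (1 - u) / den) * X \<ge> real K * (1 - u) / D * X"
    proof -
      have "real K * (1 - u) / D \<le> real K * (1 - u) / den"
        using den u Kr by (intro divide_left_mono) auto
      also have "\<dots> \<le> (1 + c0) * (real K * (1 - u) / den)"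
      proof -
        have y0: "real K * (1 - u) / den \<ge> 0" using den u Kr by simp
        have "1 * (real K * (1 - u) / den) \<le> (1 + c0) * (real K * (1 - u) / den)"
          using c0 y0 by (intro mult_right_mono) auto
        thus ?thesis by simp
      qed
      finally show ?thesis using X0 by (rule mult_right_mono)
    qed
    ultimately have "real M \<ge> real K * (1 - u) / D * X" by linarith
    hence "real M * p \<ge> real K * (1 - u) / D * X * p" using u Kr by (intro mult_right_mono) (auto simp: p_def)
    also have "real K * (1 - u) / D * X * p = X / D" using u Kr D by (simp add: p_def field_simps)
    finally show ?thesis .
  qed
  have h1: "\<kappa> * (real M * p) \<ge> (c0 + 3) * ln (real K)"
  proof -
    have "(c0 + 3) * ln (real K) = \<kappa> * ((D * (c0 + 3) / \<kappa> * ln (real K)) / D)" using \<kappa> D by (simp add: field_simps)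
    also have "\<dots> \<le> \<kappa> * (X / D)" using \<kappa> D c0 lg0 mr
      by (intro mult_left_mono divide_right_mono) (auto simp: X_def)
    also have "\<dots> \<le> \<kappa> * (real M * p)" using Mp \<kappa> by (intro mult_left_mono) auto
    finally show ?thesis .
  qed
  have h2: "\<kappa> * (mr * (real M * p)) \<ge> (c0 + 2) * lg"
  proof -
    have "(c0 + 2) * lg = \<kappa> * (mr * ((D * (c0 + 2) / \<kappa> * lg / mr) / D))" using \<kappa> D mr by (simp add: field_simps)
    also have "\<dots> \<le> \<kappa> * (mr * (X / D))" using \<kappa> D c0 lnK mr
      by (intro mult_left_mono divide_right_mono) (auto simp: X_def)
    also have "\<dots> \<le> \<kappa> * (mr * (real M * p))" using Mp \<kappa> mr by (intro mult_left_mono) auto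
    finally show ?thesis .
  qed
  have "measure_pmf.prob (gt_pmf M N p u q) {s. \<not> alg_succeeds N L Sd (sc \<psi> M Sd s)}
     \<le> (1 + real K) * exp (- \<kappa> * (real M * p)) + real C * exp (- \<kappa> * (mr * (real M * p)))"
    using main_general[OF u q \<psi> Sd _ L, of M] K mr(1) by (simp add: p_def C_def \<kappa>_def)
  also have "\<dots> < exp (- c0 * lg) + exp (- c0 * ln (real K))"
    using final_arith[of K C c0 \<kappa> "real M * p" mr] K C1 c0 h1 h2 by (simp add: lg_def)
  finally show ?thesis by (simp add: p_def C_def lg_def)
qed


lemma prob_not: "measure_pmf.prob P {s. Q s} = 1 - measure_pmf.prob P {s. \<not> Q s}"
proof -
  have "measure_pmf.prob P (space (measure_pmf P) - {s. \<not> Q s}) = 1 - measure_pmf.prob P {s. \<not> Q s}"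
    by (rule measure_pmf.prob_compl) simp
  moreover have "space (measure_pmf P) - {s. \<not> Q s} = {s. Q s}" by auto
  ultimately show ?thesis by simp
qed

lemma psi0_bound:
  fixes u q :: real and K :: nat
  assumes u: "0 \<le> u" "u < 1/2" and q: "0 \<le> q" "q < 1/2" and K: "K > 1"
  defines "p \<equiv> 1 / ((1 - u) * real K)"
  defines "\<gamma> \<equiv> u / (1 - (1 - u) * p)" and "\<Gamma> \<equiv> (1 - q) * (1 - (1 - u) * p) ^ K"
  shows "0 \<le> \<gamma> * \<Gamma> / (1 - \<gamma> * \<Gamma>)" "\<gamma> * \<Gamma> / (1 - \<gamma> * \<Gamma>) \<le> psib u"
proof -
  have Kr: "real K \<ge> 2" using K by simp
  have up: "(1 - u) * p = 1 / real K" using u Kr by (simp add: p_def)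
  have b: "1 - (1 - u) * p \<ge> 1/2" "1 - (1 - u) * p \<le> 1" unfolding up using Kr by (auto simp: field_simps)
  have g0: "0 \<le> \<gamma>" using u b by (simp add: \<gamma>_def)
  have g1: "\<gamma> \<le> 2 * u"
  proof -
    have "u / (1 - (1 - u) * p) \<le> u / (1/2)" using u b by (intro divide_left_mono) auto
    thus ?thesis by (simp add: \<gamma>_def)
  qed
  have G: "0 \<le> \<Gamma>" "\<Gamma> \<le> 1"
  proof -
    show "0 \<le> \<Gamma>" using q b by (simp add: \<Gamma>_def)
    have "(1 - q) * (1 - (1 - u) * p) ^ K \<le> 1 * 1" using q b by (intro mult_mono) (auto simp: power_le_one)
    thus "\<Gamma> \<le> 1" by (simp add: \<Gamma>_def)
  qed
  have x0: "0 \<le> \<gamma> * \<Gamma>" using g0 G by simp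
  have x1: "\<gamma> * \<Gamma> \<le> 2 * u" using g0 g1 G mult_mono[of \<gamma> "2*u" \<Gamma> 1] u by simp
  show "0 \<le> \<gamma> * \<Gamma> / (1 - \<gamma> * \<Gamma>)" using x0 x1 u by simp
  show "\<gamma> * \<Gamma> / (1 - \<gamma> * \<Gamma>) \<le> psib u"
    unfolding psib_def using x0 x1 u by (intro frac_le) auto
qed

theorem theorem1:
  fixes u q c0 :: real
  assumes u: "0 \<le> u" "u < 1/2" and q: "0 \<le> q" "q < 1/2" and c0: "c0 > 0"
  shows
   "(\<exists>Ca1 Ca2 :: real. Ca1 > 0 \<and> Ca2 > 0 \<and>
      (\<forall>N K L M :: nat. \<forall>Sd :: nat set.
         let p = 1 / ((1 - u) * real K);
             \<Gamma> = (1 - q) * (1 - (1 - u) * p) ^ K;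
             \<gamma>0 = u / (1 - (1 - u) * p);
             \<psi>0 = (0::real);
             lg = ln (real K * real ((N - K) choose (L - 1)))
         in (K > 1 \<and> Sd \<subseteq> {..<N} \<and> card Sd = K \<and> 1 \<le> L \<and> L \<le> N - K \<and>
             real M \<ge> (1 + c0) * (real K * (1 - u) / ((1 - q) * (1 - \<gamma>0)^2 * (1 + \<psi>0))) *
                  (Ca1 * lg / (real (N - K) - real (L - 1)) + Ca2 * ln (real K)))
            \<longrightarrow> measure_pmf.prob (gt_pmf M N p u q)
                  {s. alg_succeeds N L Sd (roal_score M Sd s)}
                > 1 - exp (- c0 * lg) - exp (- c0 * ln (real K))))
    \<and>
    (\<exists>Ca1 Ca2 :: real. Ca1 > 0 \<and> Ca2 > 0 \<and>
      (\<forall>N K L M :: nat. \<forall>Sd :: nat set.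
         let p = 1 / ((1 - u) * real K);
             \<Gamma> = (1 - q) * (1 - (1 - u) * p) ^ K;
             \<gamma>0 = u / (1 - (1 - u) * p);
             \<psi>0 = \<gamma>0 * \<Gamma> / (1 - \<gamma>0 * \<Gamma>);
             lg = ln (real K * real ((N - K) choose (L - 1)))
         in (K > 1 \<and> Sd \<subseteq> {..<N} \<and> card Sd = K \<and> 1 \<le> L \<and> L \<le> N - K \<and>
             real M \<ge> (1 + c0) * (real K * (1 - u) / ((1 - q) * (1 - \<gamma>0)^2 * (1 + \<psi>0))) *
                  (Ca1 * lg / (real (N - K) - real (L - 1)) + Ca2 * ln (real K)))
            \<longrightarrow> measure_pmf.prob (gt_pmf M N p u q)
                  {s. alg_succeeds N L Sd (coal_score \<psi>0 M Sd s)}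
                > 1 - exp (- c0 * lg) - exp (- c0 * ln (real K))))"
proof -
  note cs = consts_pos[OF u]
  define Ca1 where "Ca1 = (1 + psib u) * (c0 + 2) / kap u"
  define Ca2 where "Ca2 = (1 + psib u) * (c0 + 3) / kap u"
  have Ca: "Ca1 > 0" "Ca2 > 0" using cs c0 by (auto simp: Ca1_def Ca2_def add_pos_nonneg)
  have A: "Ca1 * lg / mr = (1 + psib u) * (c0 + 2) / kap u * lg / mr" for lg mr :: real
    by (simp add: Ca1_def)
  show ?thesis
  proof (rule conjI, goal_cases)
    case 1
    show ?case
    proof (rule exI[of _ Ca1], rule exI[of _ Ca2], intro conjI Ca allI, unfold Let_def, intro impI, goal_cases)
      case (1 N K L M Sd)
      hence H: "K > 1" "Sd \<subseteq> {..<N}" "card Sd = K" "1 \<le> L" "L \<le> N - K" by auto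
      have "measure_pmf.prob (gt_pmf M N (1 / ((1 - u) * real K)) u q) {s. \<not> alg_succeeds N L Sd (sc 0 M Sd s)}
       < exp (- c0 * ln (real K * real ((N - K) choose (L - 1)))) + exp (- c0 * ln (real K))"
        by (rule core[OF u q c0 _ _ H]) (use 1 cs in \<open>auto simp: Ca1_def Ca2_def\<close>)
      thus ?case by (subst prob_not) (simp add: roal_sc)
    qed
  next
    case 2
    show ?case
    proof (rule exI[of _ Ca1], rule exI[of _ Ca2], intro conjI Ca allI, unfold Let_def, intro impI, goal_cases)
      case (1 N K L M Sd)
      hence H: "K > 1" "Sd \<subseteq> {..<N}" "card Sd = K" "1 \<le> L" "L \<le> N - K" by auto
      note ps = psi0_bound[OF u q H(1)]
      have "measure_pmf.prob (gt_pmf M N (1 / ((1 - u) * real K)) u q) {s. \<not> alg_succeeds N L Sd (sc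
           (u / (1 - (1 - u) * (1 / ((1 - u) * real K))) * ((1 - q) * (1 - (1 - u) * (1 / ((1 - u) * real K))) ^ K) /
                 (1 - u / (1 - (1 - u) * (1 / ((1 - u) * real K))) * ((1 - q) * (1 - (1 - u) * (1 / ((1 - u) * real K))) ^ K))) M Sd s)}
       < exp (- c0 * ln (real K * real ((N - K) choose (L - 1)))) + exp (- c0 * ln (real K))"
        by (rule core[OF u q c0 ps H]) (use 1 in \<open>unfold Ca1_def Ca2_def, blast\<close>)
      thus ?case by (subst prob_not) (simp add: coal_sc)
    qed
  qed
qed


end
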